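(* Assume all target-SINRs satisfy $\gamma^{\mathrm{tar}}_i>0$. Let $\boldsymbol{\gamma}^\star$ be an optimal solution of the SINR-assignment problem $$\max_{\boldsymbol{\gamma}\in\mathbf{T}_{\boldsymbol{\gamma}}} |\mathcal{A}(\boldsymbol{\gamma})| \quad\text{s.t.}\quad \boldsymbol{\gamma}\in\mathbf{F}_{\boldsymbol{\gamma}}\cap\mathbf{G}_{\boldsymbol{\gamma}}.$$ Then the power vector $\mathbf{p}(\boldsymbol{\gamma}^\star)=(\mathbf{I}-\mathbf{F}(\boldsymbol{\gamma}^\star))^{-1}\mathbf{U}(\boldsymbol{\gamma}^\star)$ is an optimal solution of the power-allocation problem $$\max_{\mathbf{p}} |\mathcal{S}(\mathbf{p})| \quad\text{s.t.}\quad 0\le p_i\le p^{\max}_i\ \forall i\in\mathcal{M},\quad \mathbf{p}\in\mathbf{G}_{\mathbf{p}},$$ and it is a minimal element (componentwise) of the set of optimal solutions of this power-allocation problem, i.e., no other optimal solution $\mathbf{p}'\neq \mathbf{p}(\boldsymbol{\gamma}^\star)$ satisfies $\mathbf{p}'\le \mathbf{p}(\boldsymbol{\gamma}^\star)$ componentwise.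
   Context: Uplink multi-tier cellular model: users $\mathcal{M}=\{1,\dots,M\}$, base stations (BSs) $\mathcal{B}=\{1,\dots,B\}$, priority levels $\mathcal{K}=\{1,\dots,K\}$ ($1$ = highest). User $i$ is served by BS $b_i$; each user belongs to a priority level, and $\mathcal{M}^{\mathcal{K}}_q$ denotes the set of users with priority $q$. Uplink path gains $h_{m,i}>0$ (from user $i$ to BS $m$), noise powers $N_m>0$ at BS $m$, maximum powers $p_i^{\max}>0$. For a power vector $\mathbf{p}\in\mathbb{R}^M$, the SINR of user $i$ is $\gamma_i(\mathbf{p})=\frac{h_{b_i,i}p_i}{\sum_{j\ne i}h_{b_i,j}p_j+N_{b_i}}$. For an SINR vector $\boldsymbol{\gamma}\ge 0$, $\mathbf{p}(\boldsymbol{\gamma})=(\mathbf{I}-\mathbf{F}(\boldsymbol{\gamma}))^{-1}\mathbf{U}(\boldsymbol{\gamma})$ where $U_i=\gamma_iN_{b_i}/h_{b_i,i}$, $F_{ii}=0$, $F_{ij}=\gamma_i h_{b_i,j}/h_{b_i,i}$ for $i\ne j$ (assumed invertible whenever used). $\mathbf{F}_{\boldsymbol{\gamma}}=\{\boldsymbol{\gamma}: 0\le p_i(\boldsymbol{\gamma})\le p_i^{\max}\ \forall i\}$ (feasible SINR vectors). $\mathbf{T}_{\boldsymbol{\gamma}}=\prod_{i\in\mathcal{M}}\{\gamma^{\mathrm{tar}}_i,0\}$. $\mathcal{A}(\boldsymbol{\gamma})=\{i:\gamma_i>0\}$. $\mathcal{S}(\mathbf{p})=\{i:\gamma_i(\mathbf{p})\ge\gamma^{\mathrm{tar}}_i\}$.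 Priority constraint sets: $\mathbf{G}_{\mathbf{p}}$ is the set of $\mathbf{p}$ such that whenever some $i\in\mathcal{M}^{\mathcal{K}}_q$ with $q>1$ has $\gamma_i(\mathbf{p})\ge\gamma^{\mathrm{tar}}_i$, then $\gamma_j(\mathbf{p})\ge\gamma^{\mathrm{tar}}_j$ for all $j\in\mathcal{M}^{\mathcal{K}}_{q'}$, $q'<q$; $\mathbf{G}_{\boldsymbol{\gamma}}$ is defined identically with $\gamma_i$ in place of $\gamma_i(\mathbf{p})$. *)

theory Defs
  imports "HOL-Analysis.Analysis"
begin

text \<open>Users are indexed by a finite type 'm, base stations by a type 'b.
  h b i : path gain from user i to BS b; N b : noise at BS b; serv i : serving BS of user i;
  lev i : priority level of user i (1 = highest); gtar i : target SINR of user i.\<close>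

definition sinr :: "('b \<Rightarrow> 'm::finite \<Rightarrow> real) \<Rightarrow> ('b \<Rightarrow> real) \<Rightarrow> ('m \<Rightarrow> 'b)
    \<Rightarrow> real^'m \<Rightarrow> 'm \<Rightarrow> real" where
  "sinr h N serv p i =
     h (serv i) i * p$i / ((\<Sum>j\<in>UNIV - {i}. h (serv i) j * p$j) + N (serv i))"

definition Uvec :: "('b \<Rightarrow> 'm::finite \<Rightarrow> real) \<Rightarrow> ('b \<Rightarrow> real) \<Rightarrow> ('m \<Rightarrow> 'b)
    \<Rightarrow> real^'m \<Rightarrow> real^'m" where
  "Uvec h N serv g = (\<chi> i. g$i * N (serv i) / h (serv i) i)"

definition Fmat :: "('b \<Rightarrow> 'm::finite \<Rightarrow> real) \<Rightarrow> ('m \<Rightarrow> 'b)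
    \<Rightarrow> real^'m \<Rightarrow> real^'m^'m" where
  "Fmat h serv g = (\<chi> i j. if i = j then 0 else g$i * h (serv i) j / h (serv i) i)"

definition pow_of :: "('b \<Rightarrow> 'm::finite \<Rightarrow> real) \<Rightarrow> ('b \<Rightarrow> real) \<Rightarrow> ('m \<Rightarrow> 'b)
    \<Rightarrow> real^'m \<Rightarrow> real^'m" where
  "pow_of h N serv g = matrix_inv (mat 1 - Fmat h serv g) *v Uvec h N serv g"

definition feasible_sinr :: "('b \<Rightarrow> 'm::finite \<Rightarrow> real) \<Rightarrow> ('b \<Rightarrow> real) \<Rightarrow> ('m \<Rightarrow> 'b)
    \<Rightarrow> ('m \<Rightarrow> real) \<Rightarrow> (real^'m) set" where
  "feasible_sinr h N serv pmax = {g. invertible (mat 1 - Fmat h serv g) \<and>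
      (\<forall>i. 0 \<le> pow_of h N serv g $ i \<and> pow_of h N serv g $ i \<le> pmax i)}"

definition target_set :: "('m::finite \<Rightarrow> real) \<Rightarrow> (real^'m) set" where
  "target_set gtar = {g. \<forall>i. g$i = gtar i \<or> g$i = 0}"

definition active :: "real^'m::finite \<Rightarrow> 'm set" where
  "active g = {i. g$i > 0}"

definition succ_set :: "('b \<Rightarrow> 'm::finite \<Rightarrow> real) \<Rightarrow> ('b \<Rightarrow> real) \<Rightarrow> ('m \<Rightarrow> 'b)
    \<Rightarrow> ('m \<Rightarrow> real) \<Rightarrow> real^'m \<Rightarrow> 'm set" where
  "succ_set h N serv gtar p = {i. sinr h N serv p i \<ge> gtar i}"

definition G_sinr :: "('m::finite \<Rightarrow> nat) \<Rightarrow> ('m \<Rightarrow> real) \<Rightarrow> (real^'m) set" where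
  "G_sinr lev gtar = {g. \<forall>i. lev i > 1 \<and> g$i \<ge> gtar i \<longrightarrow>
      (\<forall>j. lev j < lev i \<longrightarrow> g$j \<ge> gtar j)}"

definition G_pow :: "('b \<Rightarrow> 'm::finite \<Rightarrow> real) \<Rightarrow> ('b \<Rightarrow> real) \<Rightarrow> ('m \<Rightarrow> 'b)
    \<Rightarrow> ('m \<Rightarrow> nat) \<Rightarrow> ('m \<Rightarrow> real) \<Rightarrow> (real^'m) set" where
  "G_pow h N serv lev gtar = {p. \<forall>i. lev i > 1 \<and> sinr h N serv p i \<ge> gtar i \<longrightarrow>
      (\<forall>j. lev j < lev i \<longrightarrow> sinr h N serv p j \<ge> gtar j)}"

definition pow_feasible :: "('b \<Rightarrow> 'm::finite \<Rightarrow> real) \<Rightarrow> ('b \<Rightarrow> real) \<Rightarrow> ('m \<Rightarrow> 'b)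
    \<Rightarrow> ('m \<Rightarrow> nat) \<Rightarrow> ('m \<Rightarrow> real) \<Rightarrow> ('m \<Rightarrow> real) \<Rightarrow> (real^'m) set" where
  "pow_feasible h N serv lev gtar pmax =
     {p. (\<forall>i. 0 \<le> p$i \<and> p$i \<le> pmax i) \<and> p \<in> G_pow h N serv lev gtar}"

definition pow_optimal :: "('b \<Rightarrow> 'm::finite \<Rightarrow> real) \<Rightarrow> ('b \<Rightarrow> real) \<Rightarrow> ('m \<Rightarrow> 'b)
    \<Rightarrow> ('m \<Rightarrow> nat) \<Rightarrow> ('m \<Rightarrow> real) \<Rightarrow> ('m \<Rightarrow> real) \<Rightarrow> (real^'m) set" where
  "pow_optimal h N serv lev gtar pmax =
     {p. p \<in> pow_feasible h N serv lev gtar pmax \<and>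
        (\<forall>q \<in> pow_feasible h N serv lev gtar pmax.
            card (succ_set h N serv gtar q) \<le> card (succ_set h N serv gtar p))}"

definition sinr_optimal :: "('b \<Rightarrow> 'm::finite \<Rightarrow> real) \<Rightarrow> ('b \<Rightarrow> real) \<Rightarrow> ('m \<Rightarrow> 'b)
    \<Rightarrow> ('m \<Rightarrow> nat) \<Rightarrow> ('m \<Rightarrow> real) \<Rightarrow> ('m \<Rightarrow> real) \<Rightarrow> (real^'m) set" where
  "sinr_optimal h N serv lev gtar pmax =
     {g. g \<in> target_set gtar \<and> g \<in> feasible_sinr h N serv pmax \<and> g \<in> G_sinr lev gtar \<and>
        (\<forall>g' \<in> target_set gtar. g' \<in> feasible_sinr h N serv pmax \<and> g' \<in> G_sinr lev gtar
            \<longrightarrow> card (active g') \<le> card (active g))}"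

end

theory Submission
  imports Defs
begin

lemma inv_right_aux:
  fixes A :: "real^'n^'n"
  assumes "invertible A"
  shows "A ** matrix_inv A = mat 1"
  using someI_ex[OF assms[unfolded invertible_def]] unfolding matrix_inv_def by blast

lemma fixed_eq:
  fixes F :: "real^'n^'n"
  assumes "invertible (mat 1 - F)"
  shows "matrix_inv (mat 1 - F) *v U = F *v (matrix_inv (mat 1 - F) *v U) + U"
proof -
  let ?p = "matrix_inv (mat 1 - F) *v U"
  have "(mat 1 - F) *v ?p = U"
    by (simp add: matrix_vector_mul_assoc inv_right_aux[OF assms])
  hence "?p - F *v ?p = U" by (simp add: matrix_vector_mult_diff_rdistrib)
  thus ?thesis by (simp add: algebra_simps)
qed

lemma maxprin:
  fixes F :: "real^'m::finite^'m" and q x :: "real^'m"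
  assumes Fnn: "\<And>i j. F$i$j \<ge> 0"
    and zr: "\<And>i j. i \<notin> S \<Longrightarrow> F$i$j = 0"
    and qnn: "\<And>i. q$i \<ge> 0"
    and qpos: "\<And>i. i \<in> S \<Longrightarrow> q$i > 0"
    and strict: "\<And>i. i \<in> S \<Longrightarrow> (\<Sum>j\<in>UNIV. F$i$j * q$j) < q$i"
    and xle: "\<And>i. x$i \<le> (\<Sum>j\<in>UNIV. F$i$j * x$j)"
  shows "x$i \<le> 0"
proof (rule ccontr)
  assume "\<not> x$i \<le> 0"
  hence xi: "x$i > 0" by simp
  have iS: "i \<in> S"
  proof (rule ccontr)
    assume "i \<notin> S" with xle[of i] zr[of i] xi show False by simp
  qed
  define T where "T = (\<lambda>k. x$k / q$k) ` S"
  have fT: "finite T" unfolding T_def by simp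
  have neT: "T \<noteq> {}" using iS unfolding T_def by auto
  define t where "t = Max T"
  obtain k where kS: "k \<in> S" and tk: "t = x$k / q$k"
    using Max_in[OF fT neT] unfolding t_def T_def by auto
  have tge: "t \<ge> x$i / q$i" unfolding t_def T_def using iS by (simp add: fT[unfolded T_def])
  have tpos: "t > 0" using tge xi qpos[OF iS] by (smt (verit) divide_pos_pos)
  have bound: "x$j \<le> t * q$j" for j
  proof (cases "j \<in> S")
    case True
    have "x$j / q$j \<le> t" unfolding t_def T_def using True by (simp add: fT[unfolded T_def])
    thus ?thesis using qpos[OF True] by (simp add: divide_le_eq mult.commute)
  next
    case False
    hence "x$j \<le> 0" using xle[of j] zr[of j] by simp
    thus ?thesis using tpos qnn[of j] by (smt (verit) mult_nonneg_nonneg)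
  qed
  have "x$k \<le> (\<Sum>j\<in>UNIV. F$k$j * x$j)" by (rule xle)
  also have "\<dots> \<le> (\<Sum>j\<in>UNIV. F$k$j * (t * q$j))"
    by (rule sum_mono) (simp add: Fnn bound mult_left_mono)
  also have "\<dots> = t * (\<Sum>j\<in>UNIV. F$k$j * q$j)"
    by (simp add: sum_distrib_left algebra_simps)
  also have "\<dots> < t * q$k" using strict[OF kS] tpos by simp
  also have "\<dots> = x$k" using tk qpos[OF kS] by simp
  finally show False by simp
qed

lemma sum_skip:
  fixes f :: "'m::finite \<Rightarrow> real"
  shows "(\<Sum>j\<in>UNIV. (if i = j then 0 else f j)) = (\<Sum>j\<in>UNIV-{i}. f j)"
proof -
  have "(\<Sum>j\<in>UNIV. (if i = j then 0 else f j)) = (if i = i then 0 else f i) + (\<Sum>j\<in>UNIV-{i}. (if i = j then 0 else f j))"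
    by (rule sum.remove) auto
  also have "\<dots> = (\<Sum>j\<in>UNIV-{i}. f j)" by simp
  finally show ?thesis .
qed

lemma Fmv:
  fixes h :: "'b \<Rightarrow> 'm::finite \<Rightarrow> real"
  shows "(Fmat h serv g *v p) $ i = g$i / h (serv i) i * (\<Sum>j\<in>UNIV-{i}. h (serv i) j * p$j)"
proof -
  have "(Fmat h serv g *v p) $ i = (\<Sum>j\<in>UNIV. (if i = j then 0 else g$i / h (serv i) i * (h (serv i) j * p$j)))"
    unfolding Fmat_def matrix_vector_mult_def by (simp, intro sum.cong) auto
  also have "\<dots> = g$i / h (serv i) i * (\<Sum>j\<in>UNIV-{i}. h (serv i) j * p$j)"
    by (simp add: sum_skip sum_distrib_left)
  finally show ?thesis .
qed

lemma Fmat_sum: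
  fixes h :: "'b \<Rightarrow> 'm::finite \<Rightarrow> real"
  shows "(\<Sum>j\<in>UNIV. Fmat h serv g $i$j * p$j) = (Fmat h serv g *v p) $ i"
  unfolding matrix_vector_mult_def by simp

lemma pow_fix:
  fixes h :: "'b \<Rightarrow> 'm::finite \<Rightarrow> real"
  assumes "invertible (mat 1 - Fmat h serv g)"
  shows "pow_of h N serv g $ i = g$i / h (serv i) i * ((\<Sum>j\<in>UNIV-{i}. h (serv i) j * pow_of h N serv g$j) + N (serv i))"
proof -
  have "pow_of h N serv g = Fmat h serv g *v pow_of h N serv g + Uvec h N serv g"
    unfolding pow_of_def by (rule fixed_eq[OF assms])
  hence "pow_of h N serv g $ i = (Fmat h serv g *v pow_of h N serv g) $ i + Uvec h N serv g $ i"
    by (metis vector_add_component)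
  thus ?thesis by (simp add: Fmv Uvec_def algebra_simps)
qed

lemma sinr_pow:
  fixes h :: "'b \<Rightarrow> 'm::finite \<Rightarrow> real"
  assumes hp: "\<And>b i. h b i > 0" and Np: "\<And>b. N b > 0"
    and inv: "invertible (mat 1 - Fmat h serv g)"
    and nn: "\<And>j. pow_of h N serv g $ j \<ge> 0"
  shows "sinr h N serv (pow_of h N serv g) i = g$i"
proof -
  let ?p = "pow_of h N serv g"
  let ?D = "(\<Sum>j\<in>UNIV-{i}. h (serv i) j * ?p$j) + N (serv i)"
  have D: "?D > 0"
  proof -
    have "(\<Sum>j\<in>UNIV-{i}. h (serv i) j * ?p$j) \<ge> 0"
      by (intro sum_nonneg mult_nonneg_nonneg) (auto simp: nn less_imp_le hp)
    thus ?thesis using Np[of "serv i"] by linarith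
  qed
  have "?p $ i = g$i / h (serv i) i * ?D" by (rule pow_fix[OF inv])
  hence "h (serv i) i * ?p$i = g$i * ?D" using hp[of "serv i" i] by simp
  thus ?thesis unfolding sinr_def using D by (simp add: field_simps)
qed

lemma construct:
  fixes h :: "'b \<Rightarrow> 'm::finite \<Rightarrow> real"
  assumes hp: "\<And>b i. h b i > 0" and Np: "\<And>b. N b > 0"
    and gtp: "\<And>i. gtar i > 0"
    and qf: "q \<in> pow_feasible h N serv lev gtar pmax"
  defines "g' \<equiv> (\<chi> i. if i \<in> succ_set h N serv gtar q then gtar i else 0)"
  shows "g' \<in> target_set gtar" "g' \<in> feasible_sinr h N serv pmax" "g' \<in> G_sinr lev gtar"
    "active g' = succ_set h N serv gtar q" "\<And>i. pow_of h N serv g' $ i \<le> q$i"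
proof -
  let ?S = "succ_set h N serv gtar q"
  let ?F = "Fmat h serv g'"
  let ?U = "Uvec h N serv g'"
  have qnn: "\<And>i. q$i \<ge> 0" and qmax: "\<And>i. q$i \<le> pmax i" and qG: "q \<in> G_pow h N serv lev gtar"
    using qf unfolding pow_feasible_def by auto
  have g'c: "g'$i = (if i \<in> ?S then gtar i else 0)" for i unfolding g'_def by simp
  have g'nn: "g'$i \<ge> 0" for i using gtp[of i] by (simp add: g'c less_imp_le)
  have g'ge: "g'$i \<ge> gtar i \<longleftrightarrow> i \<in> ?S" for i using gtp[of i] by (simp add: g'c)
  show "g' \<in> target_set gtar" unfolding target_set_def by (auto simp: g'c)
  show "active g' = ?S" unfolding active_def using gtp by (auto simp: g'c)
  show "g' \<in> G_sinr lev gtar" unfolding G_sinr_def using qG unfolding G_pow_def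
    by (auto simp: g'ge succ_set_def)
  have Fnn: "\<And>i j. ?F$i$j \<ge> 0" unfolding Fmat_def
    using g'nn hp by (simp add: less_imp_le)
  have zr: "\<And>i j. i \<notin> ?S \<Longrightarrow> ?F$i$j = 0" unfolding Fmat_def by (simp add: g'c)
  have Upos: "\<And>i. i \<in> ?S \<Longrightarrow> ?U$i > 0" unfolding Uvec_def using gtp hp Np by (simp add: g'c)
  have Unn: "\<And>i. ?U$i \<ge> 0" unfolding Uvec_def using g'nn hp Np
    by (simp add: less_imp_le)
  have qsup: "(\<Sum>j\<in>UNIV. ?F$i$j * q$j) + ?U$i \<le> q$i" for i
  proof (cases "i \<in> ?S")
    case False
    thus ?thesis using zr[OF False] qnn[of i] unfolding Uvec_def by (simp add: g'c)
  next
    case True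
    let ?I = "(\<Sum>j\<in>UNIV-{i}. h (serv i) j * q$j)"
    have Inn: "?I \<ge> 0" by (intro sum_nonneg mult_nonneg_nonneg) (auto simp: qnn less_imp_le hp)
    have D: "?I + N (serv i) > 0" using Inn Np[of "serv i"] by linarith
    have "gtar i \<le> h (serv i) i * q$i / (?I + N (serv i))"
      using True unfolding succ_set_def sinr_def by simp
    hence le: "gtar i * (?I + N (serv i)) \<le> h (serv i) i * q$i" using D by (simp add: pos_le_divide_eq)
    have "(\<Sum>j\<in>UNIV. ?F$i$j * q$j) + ?U$i = gtar i / h (serv i) i * (?I + N (serv i))"
      using True by (simp only: Fmat_sum Fmv) (simp add: Uvec_def g'c algebra_simps)
    also have "\<dots> \<le> q$i" using le hp[of "serv i" i] by (simp add: field_simps)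
    finally show ?thesis .
  qed
  have qpos: "\<And>i. i \<in> ?S \<Longrightarrow> q$i > 0"
    using qsup Upos by (smt (verit) Fnn qnn mult_nonneg_nonneg sum_nonneg)
  have strict: "\<And>i. i \<in> ?S \<Longrightarrow> (\<Sum>j\<in>UNIV. ?F$i$j * q$j) < q$i"
    using qsup Upos by (smt (verit))
  have mp: "x$i \<le> 0" if "\<And>i. x$i \<le> (\<Sum>j\<in>UNIV. ?F$i$j * x$j)" for x i
    using Fnn zr qnn qpos strict that by (rule maxprin)
  have inv: "invertible (mat 1 - ?F)"
    unfolding invertible_left_inverse matrix_left_invertible_ker
  proof (intro allI impI)
    fix x assume "(mat 1 - ?F) *v x = 0"
    hence "x - ?F *v x = 0" by (simp add: matrix_vector_mult_diff_rdistrib)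
    hence xe: "x = ?F *v x" by simp
    have x1: "x$i = (\<Sum>j\<in>UNIV. ?F$i$j * x$j)" for i
      by (subst xe) (simp add: matrix_vector_mult_def)
    have x2: "x$i \<le> (\<Sum>j\<in>UNIV. ?F$i$j * x$j)" for i using x1[of i] by linarith
    have x3: "(-x)$i \<le> (\<Sum>j\<in>UNIV. ?F$i$j * (-x)$j)" for i
      using x1[of i] by (simp add: sum_negf)
    have a: "x$i \<le> 0" for i using mp[OF x2] by blast
    have b: "(-x)$i \<le> 0" for i using mp[OF x3] by blast
    show "x = 0" using a b by (simp add: vec_eq_iff) (meson antisym neg_le_0_iff_le)
  qed
  let ?p = "pow_of h N serv g'"
  have pe: "?p = ?F *v ?p + ?U" unfolding pow_of_def by (rule fixed_eq[OF inv])
  have p1: "?p$i = (\<Sum>j\<in>UNIV. ?F$i$j * ?p$j) + ?U$i" for i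
    by (subst pe) (simp add: matrix_vector_mult_def)
  have ple: "?p$i \<le> q$i" for i
  proof -
    have "(?p - q)$i \<le> 0"
    proof (rule mp)
      fix i
      have "(\<Sum>j\<in>UNIV. ?F$i$j * (?p - q)$j) = (\<Sum>j\<in>UNIV. ?F$i$j * ?p$j) - (\<Sum>j\<in>UNIV. ?F$i$j * q$j)"
        by (simp add: right_diff_distrib sum_subtractf)
      thus "(?p - q)$i \<le> (\<Sum>j\<in>UNIV. ?F$i$j * (?p - q)$j)" using p1[of i] qsup[of i] by simp
    qed
    thus ?thesis by simp
  qed
  have pnn: "?p$i \<ge> 0" for i
  proof -
    have "(-?p)$i \<le> 0"
    proof (rule mp)
      fix i
      have "(\<Sum>j\<in>UNIV. ?F$i$j * (-?p)$j) = - (\<Sum>j\<in>UNIV. ?F$i$j * ?p$j)"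
        by (simp add: sum_negf[symmetric])
      thus "(-?p)$i \<le> (\<Sum>j\<in>UNIV. ?F$i$j * (-?p)$j)" using p1[of i] Unn[of i] by simp
    qed
    thus ?thesis by simp
  qed
  show "\<And>i. ?p $ i \<le> q$i" by (rule ple)
  show "g' \<in> feasible_sinr h N serv pmax" unfolding feasible_sinr_def
    using inv pnn ple qmax by (auto intro: order_trans)
qed

theorem proposition1:
  fixes h :: "'b \<Rightarrow> 'm::finite \<Rightarrow> real"
    and N :: "'b \<Rightarrow> real"
    and serv :: "'m \<Rightarrow> 'b"
    and lev :: "'m \<Rightarrow> nat"
    and K :: nat
    and gtar pmax :: "'m \<Rightarrow> real"
    and gstar :: "real^'m"
  assumes h_pos: "\<And>b i. h b i > 0"
    and N_pos: "\<And>b. N b > 0"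
    and pmax_pos: "\<And>i. pmax i > 0"
    and lev_range: "\<And>i. lev i \<in> {1..K}"
    and gtar_pos: "\<And>i. gtar i > 0"
    and opt: "gstar \<in> sinr_optimal h N serv lev gtar pmax"
  shows "pow_of h N serv gstar \<in> pow_optimal h N serv lev gtar pmax \<and>
    (\<forall>p' \<in> pow_optimal h N serv lev gtar pmax.
        (\<forall>i. p'$i \<le> pow_of h N serv gstar $ i) \<longrightarrow> p' = pow_of h N serv gstar)"
proof -
  let ?p = "pow_of h N serv gstar"
  let ?A = "active gstar"
  have tg: "gstar \<in> target_set gtar" and fs: "gstar \<in> feasible_sinr h N serv pmax"
    and Gs: "gstar \<in> G_sinr lev gtar"
    and mx: "\<And>g'. g' \<in> target_set gtar \<Longrightarrow> g' \<in> feasible_sinr h N serv pmax \<Longrightarrow> g' \<in> G_sinr lev gtar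
        \<Longrightarrow> card (active g') \<le> card ?A"
    using opt unfolding sinr_optimal_def by auto
  have gv: "gstar$i = gtar i \<or> gstar$i = 0" for i using tg unfolding target_set_def by auto
  have inv: "invertible (mat 1 - Fmat h serv gstar)" and pnn: "\<And>i. ?p$i \<ge> 0"
    and pmx: "\<And>i. ?p$i \<le> pmax i"
    using fs unfolding feasible_sinr_def by auto
  have sp: "sinr h N serv ?p i = gstar$i" for i by (rule sinr_pow[OF h_pos N_pos inv pnn])
  have geA: "gstar$i \<ge> gtar i \<longleftrightarrow> i \<in> ?A" for i
    using gv[of i] gtar_pos[of i] unfolding active_def by auto
  have SA: "succ_set h N serv gtar ?p = ?A" unfolding succ_set_def by (auto simp: sp geA)
  have pfeas: "?p \<in> pow_feasible h N serv lev gtar pmax"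
    unfolding pow_feasible_def G_pow_def using pnn pmx Gs unfolding G_sinr_def
    by (simp add: sp)
  have bnd: "card (succ_set h N serv gtar q) \<le> card ?A" if "q \<in> pow_feasible h N serv lev gtar pmax" for q
  proof -
    note c = construct[OF h_pos N_pos gtar_pos that]
    show ?thesis using mx[OF c(1) c(2) c(3)] c(4) by simp
  qed
  have popt: "?p \<in> pow_optimal h N serv lev gtar pmax"
    unfolding pow_optimal_def using pfeas bnd SA by auto
  have "p' = ?p" if p'o: "p' \<in> pow_optimal h N serv lev gtar pmax" and le: "\<forall>i. p'$i \<le> ?p$i" for p'
  proof -
    let ?S = "succ_set h N serv gtar p'"
    have p'f: "p' \<in> pow_feasible h N serv lev gtar pmax"
      and c1: "card ?A \<le> card ?S" using p'o pfeas SA unfolding pow_optimal_def by auto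
    have p'nn: "p'$i \<ge> 0" for i using p'f unfolding pow_feasible_def by auto
    have sub: "?S \<subseteq> ?A"
    proof
      fix i assume iS: "i \<in> ?S"
      show "i \<in> ?A"
      proof (rule ccontr)
        assume "i \<notin> ?A"
        hence "gstar$i = 0" using gv[of i] gtar_pos[of i] unfolding active_def by auto
        hence "?p$i = 0" using pow_fix[OF inv, of N i] by simp
        hence "p'$i = 0" using le p'nn[of i] by (metis antisym)
        hence "sinr h N serv p' i = 0" unfolding sinr_def by simp
        thus False using iS gtar_pos[of i] unfolding succ_set_def by simp
      qed
    qed
    have eq: "?S = ?A" using card_subset_eq[OF _ sub] c1 sub
      by (meson antisym card_mono finite)
    define g' where "g' = (\<chi> i. if i \<in> ?S then gtar i else 0)"
    have "g' = gstar" unfolding vec_eq_iff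
    proof
      fix i show "g'$i = gstar$i"
        using gv[of i] gtar_pos[of i] unfolding g'_def eq active_def by auto
    qed
    hence "?p$i \<le> p'$i" for i using construct(5)[OF h_pos N_pos gtar_pos p'f, of i]
      unfolding g'_def by simp
    thus ?thesis using le by (simp add: vec_eq_iff antisym)
  qed
  thus ?thesis using popt by blast
qed

end
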